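(* For any partition $\lambda=(\lambda_1,\dots,\lambda_n)$ with at most $n$ parts and generic $a,b,q,p,t\in\mathbb{C}$, \begin{multline*} W_\lambda(q^{\lambda}t^{\delta(n)};q,p,t,a,b)=\prod_{k=1}^n\left\{\frac{(qbt^{n-k},qt^{n-k})_{\lambda_k}(at^{2n-2k})_{2\lambda_k}}{((a/b)t^{n-k},at^{n-k})_{\lambda_k}(qbt^{n+1-2k})_{2\lambda_k}}t^{(n+1-2k)\lambda_k}\right\}\\ \cdot(a/(qb))^{|\lambda|}\prod_{1\le i<j\le n}\frac{(qt^{j-i-1})_{\lambda_i-\lambda_j}(at^{2n-i-j})_{\lambda_i+\lambda_j}}{(qt^{j-i})_{\lambda_i-\lambda_j}(at^{1+2n-i-j})_{\lambda_i+\lambda_j}}. \end{multline*}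
   Context: Fix $|p|<1$; parameters generic. $E(x)=(x;p)_\infty(p/x;p)_\infty$. For integer $m\ge0$, $(a)_m=\prod_{k=0}^{m-1}E(aq^k)$, for $m<0$, $(a)_m=1/(aq^m)_{-m}$; for a partition $\lambda$ with $n$ parts $(a)_\lambda=\prod_{i=1}^n(at^{1-i})_{\lambda_i}$; several arguments denote products; integer subscripts denote the single-integer symbol. $|\lambda|=\sum_i\lambda_i$, $q^\lambda t^{\delta(n)}=(q^{\lambda_1}t^{n-1},\dots,q^{\lambda_n})$. For $n$-part partitions with $\lambda_1\ge\mu_1\ge\dots\ge\lambda_n\ge\mu_n$, $\lambda_{n+1}=\mu_{n+1}=0$, $H_{\lambda/\mu}(q,p,t,b)=\prod_{1\le i<j\le n}\Big\{\frac{(q^{\mu_i-\mu_{j-1}}t^{j-i})_{\mu_{j-1}-\lambda_j}(q^{\lambda_i+\lambda_j}t^{3-j-i}b)_{\mu_{j-1}-\lambda_j}}{(q^{\mu_i-\mu_{j-1}+1}t^{j-i-1})_{\mu_{j-1}-\lambda_j}(q^{\lambda_i+\lambda_j+1}t^{2-j-i}b)_{\mu_{j-1}-\lambda_j}}\frac{(q^{\lambda_i-\mu_{j-1}+1}t^{j-i-1})_{\mu_{j-1}-\lambda_j}}{(q^{\lambda_i-\mu_{j-1}}t^{j-i})_{\mu_{j-1}-\lambda_j}}\Big\}\prod_{1\le i<j-1\le n}\frac{(q^{\mu_i+\lambda_j+1}t^{1-j-i}b)_{\mu_{j-1}-\lambda_j}}{(q^{\mu_i+\lambda_j}t^{2-j-i}b)_{\mu_{j-1}-\lambda_j}}$;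 for $x\in\mathbb{C}$, $W_{\lambda/\mu}(x;q,p,t,a,b)=H_{\lambda/\mu}\frac{(x^{-1},ax)_\lambda(qbx/t,qb/(axt))_\mu}{(x^{-1},ax)_\mu(qbx,qb/(ax))_\lambda}\prod_{i=1}^n\frac{E(bt^{1-2i}q^{2\mu_i})}{E(bt^{1-2i})}\frac{(bt^{1-2i})_{\mu_i+\lambda_{i+1}}}{(bqt^{-2i})_{\mu_i+\lambda_{i+1}}}t^{i(\mu_i-\lambda_{i+1})}$ (zero if the interlacing fails); recursively $W_{\lambda/\mu}(y,z_1,\dots,z_\ell;q,p,t,a,b)=\sum_\nu W_{\lambda/\nu}(yt^{-\ell};q,p,t,at^{2\ell},bt^\ell)W_{\nu/\mu}(z_1,\dots,z_\ell;q,p,t,a,b)$ over $\nu$ with $\lambda_1\ge\nu_1\ge\dots\ge\lambda_n\ge\nu_n\ge0$; $W_\lambda=W_{\lambda/0}$. *)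

theory Defs
  imports "HOL-Analysis.Analysis"
begin

definition qp_inf :: "complex \<Rightarrow> complex \<Rightarrow> complex" where
  "qp_inf x p = prodinf (\<lambda>k. 1 - x * p ^ k)"

definition ellE :: "complex \<Rightarrow> complex \<Rightarrow> complex" where
  "ellE p x = qp_inf x p * qp_inf (p / x) p"

definition epoch :: "complex \<Rightarrow> complex \<Rightarrow> complex \<Rightarrow> int \<Rightarrow> complex" where
  "epoch q p a m =
     (if m \<ge> 0 then (\<Prod>k<nat m. ellE p (a * q ^ k))
      else 1 / (\<Prod>k<nat (- m). ellE p (a * q powi m * q ^ k)))"

text \<open>Partitions with n parts are lists of length n; part lam i is the
  1-indexed i-th part, and 0 outside 1..n (so lam_(n+1) = 0).\<close>
definition part :: "nat list \<Rightarrow> nat \<Rightarrow> int" where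
  "part lam i = (if 1 \<le> i \<and> i \<le> length lam then int (lam ! (i - 1)) else 0)"

definition epochP :: "complex \<Rightarrow> complex \<Rightarrow> complex \<Rightarrow> complex \<Rightarrow> nat list \<Rightarrow> complex" where
  "epochP q p t a lam =
     (\<Prod>i\<in>{1..length lam}. epoch q p (a * t powi (1 - int i)) (part lam i))"

text \<open>The quotient (a)_lambda / (a)_mu written in cancelled form
  prod_i (a t^(1-i) q^(mu_i))_(lambda_i - mu_i) (valid for lambda_i >= mu_i);
  this is the entire function of a that the quotient denotes.\<close>
definition epochP_ratio :: "complex \<Rightarrow> complex \<Rightarrow> complex \<Rightarrow> complex \<Rightarrow> nat list \<Rightarrow> nat list \<Rightarrow> complex" where
  "epochP_ratio q p t a lam mu =
     (\<Prod>i\<in>{1..length lam}.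
        epoch q p (a * t powi (1 - int i) * q powi part mu i) (part lam i - part mu i))"

definition interlace :: "nat list \<Rightarrow> nat list \<Rightarrow> bool" where
  "interlace lam mu \<longleftrightarrow> length mu = length lam \<and>
     (\<forall>i<length lam. mu ! i \<le> lam ! i \<and> (Suc i < length lam \<longrightarrow> lam ! Suc i \<le> mu ! i))"

definition Hfac :: "complex \<Rightarrow> complex \<Rightarrow> complex \<Rightarrow> complex \<Rightarrow> nat list \<Rightarrow> nat list \<Rightarrow> complex" where
  "Hfac q p t b lam mu =
    (let n = length lam; L = part lam; M = part mu;
         P = epoch q p; ii = int; m = (\<lambda>j. M (j - 1) - L j) in
     (\<Prod>i\<in>{1..n}. \<Prod>j\<in>{i+1..n}.
        (P (q powi (M i - M (j - 1)) * t powi (ii j - ii i)) (m j)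
         * P (q powi (L i + L j) * t powi (3 - ii j - ii i) * b) (m j))
        / (P (q powi (M i - M (j - 1) + 1) * t powi (ii j - ii i - 1)) (m j)
           * P (q powi (L i + L j + 1) * t powi (2 - ii j - ii i) * b) (m j))
        * (P (q powi (L i - M (j - 1) + 1) * t powi (ii j - ii i - 1)) (m j)
           / P (q powi (L i - M (j - 1)) * t powi (ii j - ii i)) (m j)))
     * (\<Prod>i\<in>{1..n}. \<Prod>j\<in>{i+2..n+1}.
        P (q powi (M i + L j + 1) * t powi (1 - ii j - ii i) * b) (m j)
        / P (q powi (M i + L j) * t powi (2 - ii j - ii i) * b) (m j)))"

definition W1 :: "complex \<Rightarrow> complex \<Rightarrow> complex \<Rightarrow> nat list \<Rightarrow> nat list
                  \<Rightarrow> complex \<Rightarrow> complex \<Rightarrow> complex \<Rightarrow> complex" where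
  "W1 q p t lam mu x a b =
    (if interlace lam mu then
      (let n = length lam; L = part lam; M = part mu; P = epoch q p; ii = int in
       Hfac q p t b lam mu
       * epochP_ratio q p t (1 / x) lam mu * epochP_ratio q p t (a * x) lam mu
       * (epochP q p t (q * b * x / t) mu * epochP q p t (q * b / (a * x * t)) mu)
       / (epochP q p t (q * b * x) lam * epochP q p t (q * b / (a * x)) lam)
       * (\<Prod>i\<in>{1..n}.
           ellE p (b * t powi (1 - 2 * ii i) * q powi (2 * M i)) / ellE p (b * t powi (1 - 2 * ii i))
           * P (b * t powi (1 - 2 * ii i)) (M i + L (i + 1))
           / P (b * q * t powi (- 2 * ii i)) (M i + L (i + 1))
           * t powi (ii i * (M i - L (i + 1)))))
     else 0)"

text \<open>Multivariable W via the branching recursion (variables given as a list);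
  with no variables it is the Kronecker delta.\<close>
fun Wm :: "complex \<Rightarrow> complex \<Rightarrow> complex \<Rightarrow> nat list \<Rightarrow> nat list
           \<Rightarrow> complex list \<Rightarrow> complex \<Rightarrow> complex \<Rightarrow> complex" where
  "Wm q p t lam mu [] a b = (if lam = mu then 1 else 0)"
| "Wm q p t lam mu [y] a b = W1 q p t lam mu y a b"
| "Wm q p t lam mu (y # z # zs) a b =
     (let l = int (length (z # zs)) in
      (\<Sum>nu\<in>{nu. interlace lam nu}.
         W1 q p t lam nu (y * t powi (- l)) (a * t powi (2 * l)) (b * t powi l)
         * Wm q p t nu mu (z # zs) a b))"

definition generic_params :: "complex \<Rightarrow> complex \<Rightarrow> complex \<Rightarrow> complex \<Rightarrow> complex \<Rightarrow> bool" where
  "generic_params q p t a b \<longleftrightarrow> q \<noteq> 0 \<and> t \<noteq> 0 \<and> a \<noteq> 0 \<and> b \<noteq> 0 \<and>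
     (\<forall>k m r s l :: int. (k, m, r, s) \<noteq> (0, 0, 0, 0) \<longrightarrow>
        q powi k * t powi m * a powi r * b powi s \<noteq> p powi l)"

end

theory Submission
  imports Defs
begin


lemma qp_conv:
  fixes x p :: complex
  assumes "norm p < 1"
  shows "convergent_prod (\<lambda>k. 1 - x * p ^ k)"
proof -
  have "summable (\<lambda>k. norm x * norm p ^ k)"
    using assms by (intro summable_mult summable_geometric) auto
  moreover have "(\<lambda>k. norm ((1 - x * p ^ k) - 1)) = (\<lambda>k. norm x * norm p ^ k)"
    by (simp add: norm_mult norm_power)
  ultimately have "summable (\<lambda>k. norm ((1 - x * p ^ k) - 1))" by simp
  thus ?thesis
    by (intro abs_convergent_prod_imp_convergent_prod summable_imp_abs_convergent_prod)
qed

lemma qp_inf_zero_iff: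
  assumes "norm p < 1"
  shows "qp_inf x p = 0 \<longleftrightarrow> (\<exists>k. x * p ^ k = 1)"
proof
  assume "qp_inf x p = 0"
  then show "\<exists>k. x * p ^ k = 1"
    using prodinf_nonzero[OF qp_conv[OF assms, of x]] unfolding qp_inf_def by force
next
  assume "\<exists>k. x * p ^ k = 1"
  then obtain k where "x * p ^ k = 1" by blast
  then show "qp_inf x p = 0" unfolding qp_inf_def
    using has_prod_zeroI[OF convergent_prod_has_prod[OF qp_conv[OF assms, of x]], of k] by simp
qed

lemma qp_inf_shift:
  assumes "norm p < 1"
  shows "qp_inf x p = (1 - x) * qp_inf (x * p) p"
proof (cases "x = 1")
  case True
  have "qp_inf 1 p = 0" using qp_inf_zero_iff[OF assms, of 1] by (metis mult_1 power_0)
  then show ?thesis using True by simp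
next
  case False
  have "(\<Prod>n. (\<lambda>k. 1 - x * p ^ k) (Suc n)) = qp_inf x p / (1 - x)"
    using prodinf_split_head[OF qp_conv[OF assms, of x]] False unfolding qp_inf_def by simp
  moreover have "(\<lambda>n. (\<lambda>k. 1 - x * p ^ k) (Suc n)) = (\<lambda>k. 1 - (x * p) * p ^ k)"
    by (auto simp: mult_ac)
  ultimately show ?thesis using False unfolding qp_inf_def by (simp add: field_simps)
qed

lemma ellE_one: "norm p < 1 \<Longrightarrow> ellE p 1 = 0"
proof -
  assume a: "norm p < 1"
  have "qp_inf 1 p = 0" using qp_inf_zero_iff[OF a, of 1] by (metis mult_1 power_0)
  then show ?thesis unfolding ellE_def by simp
qed

lemma ellE_inv:
  assumes "norm p < 1" "x \<noteq> 0"
  shows "ellE p (1 / x) = - (1 / x) * ellE p x"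
proof -
  have "ellE p (1/x) = (1 - 1/x) * qp_inf (p / x) p * qp_inf (p * x) p"
    unfolding ellE_def using qp_inf_shift[OF assms(1), of "1/x"] by (simp add: mult_ac)
  moreover have "ellE p x = (1 - x) * qp_inf (p * x) p * qp_inf (p / x) p"
    unfolding ellE_def using qp_inf_shift[OF assms(1), of "x"] by (simp add: mult_ac)
  moreover have "1 - 1/x = - (1/x) * (1 - x)" using assms(2) by (simp add: field_simps)
  ultimately show ?thesis by (simp add: mult_ac)
qed

lemma ellE_nz:
  assumes "norm p < 1" "\<And>l::int. x \<noteq> p powi l"
  shows "ellE p x \<noteq> 0"
proof -
  have "qp_inf x p \<noteq> 0"
  proof
    assume "qp_inf x p = 0"
    then obtain k where "x * p ^ k = 1" using qp_inf_zero_iff[OF assms(1)] by blast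
    hence "x = p powi (- int k)" 
      by (metis mult.commute nonzero_eq_divide_eq one_neq_zero power_int_minus_divide power_int_of_nat zero_neq_one mult_zero_left mult_zero_right)
    thus False using assms(2) by blast
  qed
  moreover have "qp_inf (p / x) p \<noteq> 0"
  proof
    assume "qp_inf (p/x) p = 0"
    then obtain k where "p / x * p ^ k = 1" using qp_inf_zero_iff[OF assms(1)] by blast
    hence "x \<noteq> 0" by auto
    with \<open>p / x * p ^ k = 1\<close> have "x = p ^ Suc k"
      by (simp add: field_simps)
    hence "x = p powi (int (Suc k))" by (simp only: power_int_of_nat)
    thus False using assms(2) by blast
  qed
  ultimately show ?thesis unfolding ellE_def by simp
qed



definition mnm :: "complex \<Rightarrow> complex \<Rightarrow> complex \<Rightarrow> complex \<Rightarrow> int \<Rightarrow> int \<Rightarrow> int \<Rightarrow> int \<Rightarrow> complex" where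
  "mnm q t a b \<alpha> \<beta> \<gamma> \<delta> = q powi \<alpha> * t powi \<beta> * a powi \<gamma> * b powi \<delta>"

locale gen =
  fixes q p t a b :: complex
  assumes np: "norm p < 1" and gp: "generic_params q p t a b"
begin

lemma q0: "q \<noteq> 0" and t0: "t \<noteq> 0" and a0: "a \<noteq> 0" and b0: "b \<noteq> 0"
  using gp unfolding generic_params_def by auto

lemma epoch_nat: "epoch q p c (int m) = (\<Prod>k<m. ellE p (c * q ^ k))"
  unfolding epoch_def by simp

lemma epoch_0[simp]: "epoch q p c 0 = 1"
  unfolding epoch_def by simp

lemma epoch_Suc: "epoch q p c (int (Suc n)) = epoch q p c (int n) * ellE p (c * q ^ n)"
  by (simp only: epoch_nat prod.lessThan_Suc)

lemma epoch_split_nat: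
  "epoch q p c (int m + int k) = epoch q p c (int m) * epoch q p (c * q ^ m) (int k)"
proof (induction k)
  case 0 then show ?case by simp
next
  case (Suc k)
  have "epoch q p c (int m + int (Suc k)) = epoch q p c (int (m + k)) * ellE p (c * q ^ (m + k))"
    using epoch_Suc[of c "m + k"] by (simp add: add_ac)
  also have "\<dots> = epoch q p c (int m) * epoch q p (c * q ^ m) (int k) * ellE p (c * q ^ m * q ^ k)"
    using Suc by (simp add: power_add mult_ac)
  also have "\<dots> = epoch q p c (int m) * epoch q p (c * q ^ m) (int (Suc k))"
    by (simp only: epoch_Suc mult_ac)
  finally show ?case .
qed

lemma epoch_split:
  assumes "0 \<le> m" "0 \<le> k"
  shows "epoch q p c (m + k) = epoch q p c m * epoch q p (c * q powi m) k"
  using epoch_split_nat[of c "nat m" "nat k"] assms by (simp add: power_int_nonneg_exp)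

lemma epoch_refl_nat:
  assumes "w \<noteq> 0" "c = q powi (1 - int m) / w"
  shows "epoch q p c (int m) = (\<Prod>r<m. - (1 / (w * q ^ r))) * epoch q p w (int m)"
proof -
  have "epoch q p c (int m) = (\<Prod>r<m. ellE p (c * q ^ (m - Suc r)))"
    using prod.nat_diff_reindex[of "\<lambda>k. ellE p (c * q ^ k)" m] by (simp add: epoch_nat)
  also have "\<dots> = (\<Prod>r<m. ellE p (1 / (w * q ^ r)))"
  proof (rule prod.cong[OF refl])
    fix r assume "r \<in> {..<m}"
    hence "Suc r \<le> m" by simp
    hence h1: "q ^ (m - Suc r) * q ^ Suc r = q ^ m"
      by (simp only: power_add[symmetric] le_add_diff_inverse2)
    have qm: "q ^ k \<noteq> 0" for k using q0 by simp
    have h0: "q powi (1 - int m) = q / q ^ m"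
      using q0 by (simp add: power_int_diff power_int_of_nat)
    have X: "q ^ (m - Suc r) * q ^ r * q = q ^ m" using h1 by (simp add: mult_ac)
    have cw: "c * w = q / q ^ m" using assms h0 by simp
    have "c * q ^ (m - Suc r) * (w * q ^ r) = (c * w) * (q ^ (m - Suc r) * q ^ r * q) / q"
      using q0 by simp
    also have "\<dots> = 1" unfolding cw X using q0 qm[of m] by simp
    finally have Y: "c * q ^ (m - Suc r) * (w * q ^ r) = 1" .
    have "c * q ^ (m - Suc r) = 1 / (w * q ^ r)"
      using Y assms(1) qm[of r] by (simp add: eq_divide_eq)
    thus "ellE p (c * q ^ (m - Suc r)) = ellE p (1 / (w * q ^ r))" by simp
  qed
  also have "\<dots> = (\<Prod>r<m. - (1 / (w * q ^ r)) * ellE p (w * q ^ r))"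
  proof (rule prod.cong[OF refl])
    fix r assume "r \<in> {..<m}"
    have "w * q ^ r \<noteq> 0" using assms(1) q0 by simp
    from ellE_inv[OF np this] show "ellE p (1 / (w * q ^ r)) = - (1 / (w * q ^ r)) * ellE p (w * q ^ r)" .
  qed
  also have "\<dots> = (\<Prod>r<m. - (1 / (w * q ^ r))) * epoch q p w (int m)"
    by (simp only: epoch_nat prod.distrib)
  finally show ?thesis .
qed

lemma epoch_shift_nat:
  "epoch q p y (int m) * ellE p (y * q ^ m) = ellE p y * epoch q p (y * q) (int m)"
proof (induction m)
  case 0 then show ?case by simp
next
  case (Suc m)
  have "epoch q p y (int (Suc m)) * ellE p (y * q ^ Suc m)
      = (epoch q p y (int m) * ellE p (y * q ^ m)) * ellE p (y * q ^ Suc m)"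
    by (simp only: epoch_Suc)
  also have "\<dots> = ellE p y * (epoch q p (y * q) (int m) * ellE p (y * q * q ^ m))"
    using Suc by (simp add: mult_ac)
  also have "\<dots> = ellE p y * epoch q p (y * q) (int (Suc m))"
    by (simp only: epoch_Suc)
  finally show ?case .
qed

lemma mnm_mult_q: "mnm q t a b \<alpha> \<beta> \<gamma> \<delta> * q powi k = mnm q t a b (\<alpha> + k) \<beta> \<gamma> \<delta>"
  using q0 by (simp add: mnm_def power_int_add mult_ac)

lemma ellE_mnm_nz:
  assumes "(\<beta>, \<gamma>, \<delta>) \<noteq> (0, 0, 0)"
  shows "ellE p (mnm q t a b \<alpha> \<beta> \<gamma> \<delta>) \<noteq> 0"
proof (rule ellE_nz[OF np])
  fix l :: int
  show "mnm q t a b \<alpha> \<beta> \<gamma> \<delta> \<noteq> p powi l"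
    using gp assms unfolding generic_params_def mnm_def by auto
qed

lemma epoch_mnm_nz:
  assumes "(\<beta>, \<gamma>, \<delta>) \<noteq> (0, 0, 0)"
  shows "epoch q p (mnm q t a b \<alpha> \<beta> \<gamma> \<delta>) m \<noteq> 0"
proof -
  have e: "ellE p (mnm q t a b \<alpha> \<beta> \<gamma> \<delta> * q ^ k) \<noteq> 0" for \<alpha> k
    using ellE_mnm_nz[OF assms, of "\<alpha> + int k"] mnm_mult_q[of \<alpha> \<beta> \<gamma> \<delta> "int k"]
    by (simp add: power_int_of_nat)
  have e2: "ellE p (mnm q t a b \<alpha> \<beta> \<gamma> \<delta> * q powi m * q ^ k) \<noteq> 0" for k
    using e[of "\<alpha> + m" k] by (simp add: mnm_mult_q)
  show ?thesis unfolding epoch_def using e e2 by (simp add: prod_zero_iff)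
qed

lemma epoch_nz:
  assumes "c = mnm q t a b \<alpha> \<beta> \<gamma> \<delta>" "(\<beta>, \<gamma>, \<delta>) \<noteq> (0, 0, 0)"
  shows "epoch q p c m \<noteq> 0"
  using epoch_mnm_nz assms by simp

lemma ellE_nz':
  assumes "c = mnm q t a b \<alpha> \<beta> \<gamma> \<delta>" "(\<beta>, \<gamma>, \<delta>) \<noteq> (0, 0, 0)"
  shows "ellE p c \<noteq> 0"
  using ellE_mnm_nz assms by simp

end


lemma part_0[simp]: "part l 0 = 0"
  by (simp add: part_def)
lemma part_Cons_1[simp]: "part (x # xs) (Suc 0) = int x"
  by (simp add: part_def)
lemma part_Cons_Suc: "1 \<le> i \<Longrightarrow> part (x # xs) (Suc i) = part xs i"
  by (auto simp: part_def nth_Cons')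
lemma part_big: "length l < i \<Longrightarrow> part l i = 0"
  by (simp add: part_def)
lemma part_nonneg[simp]: "0 \<le> part l i"
  by (simp add: part_def)
lemma part_replicate0[simp]: "part (replicate N 0) i = 0"
  by (auto simp: part_def)

lemma interlace_part:
  assumes "interlace lam nu"
  shows "part nu i \<le> part lam i" and "1 \<le> i \<Longrightarrow> part lam (Suc i) \<le> part nu i"
proof -
  show "part nu i \<le> part lam i" using assms unfolding interlace_def part_def by auto
  assume i: "1 \<le> i"
  show "part lam (Suc i) \<le> part nu i"
  proof (cases "Suc i \<le> length lam")
    case True
    have "i - 1 < length lam" "Suc (i - 1) < length lam" using True i by auto
    with assms have "lam ! Suc (i - 1) \<le> nu ! (i - 1)" unfolding interlace_def by blast
    with True i show ?thesis using assms unfolding part_def interlace_def by auto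
  qed (simp add: part_def)
qed

lemma interlace_finite: "finite {nu. interlace lam nu}"
proof (rule finite_subset)
  show "{nu. interlace lam nu} \<subseteq> {xs. set xs \<subseteq> {0..sum_list lam} \<and> length xs = length lam}"
  proof safe
    fix nu x assume "interlace lam nu" "x \<in> set nu"
    then obtain i where i: "i < length nu" "nu ! i = x" by (auto simp: in_set_conv_nth)
    with \<open>interlace lam nu\<close> have "x \<le> lam ! i" "i < length lam" unfolding interlace_def by auto
    with elem_le_sum_list[of i lam] show "x \<in> {0..sum_list lam}" by simp
  qed (auto simp: interlace_def)
  show "finite {xs. set xs \<subseteq> {0..sum_list lam} \<and> length xs = length lam}"
    by (rule finite_lists_length_eq) simp
qed

lemma W1_not_interlace: "\<not> interlace lam mu \<Longrightarrow> W1 q p t lam mu x a b = 0"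
  by (simp add: W1_def)

lemma Wm_cons:
  "Wm q p t lam mu (y # zs) a b =
     (\<Sum>nu\<in>{nu. interlace lam nu}.
         W1 q p t lam nu (y * t powi (- int (length zs))) (a * t powi (2 * int (length zs))) (b * t powi int (length zs))
         * Wm q p t nu mu zs a b)"
proof (cases zs)
  case Nil
  have "(\<Sum>nu\<in>{nu. interlace lam nu}. W1 q p t lam nu y a b * (if nu = mu then 1 else 0))
      = (\<Sum>nu\<in>{nu. interlace lam nu}. if nu = mu then W1 q p t lam mu y a b else 0)"
    by (rule sum.cong) auto
  also have "\<dots> = (if mu \<in> {nu. interlace lam nu} then W1 q p t lam mu y a b else 0)"
    using interlace_finite[of lam] by (rule sum.delta)
  also have "\<dots> = W1 q p t lam mu y a b" by (auto simp: W1_not_interlace)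
  finally show ?thesis using Nil by simp
next
  case (Cons z zs')
  then show ?thesis by (simp add: Let_def)
qed

fun vs :: "complex \<Rightarrow> complex \<Rightarrow> nat list \<Rightarrow> complex list" where
  "vs q t [] = []"
| "vs q t (x # xs) = (q powi int x * t powi int (length xs)) # vs q t xs"

lemma length_vs[simp]: "length (vs q t l) = length l"
  by (induction l) auto

lemma vs_map:
  "map (\<lambda>i. q powi part lam i * t powi (int (length lam) - int i)) [1..<length lam + 1] = vs q t lam"
proof (induction lam)
  case Nil then show ?case by simp
next
  case (Cons x xs)
  have "[1..<length (x # xs) + 1] = 1 # map Suc [1..<length xs + 1]"
    by (simp add: map_Suc_upt upt_conv_Cons del: upt_Suc)
  hence "map (\<lambda>i. q powi part (x # xs) i * t powi (int (length (x # xs)) - int i)) [1..<length (x # xs) + 1]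
      = (q powi int x * t powi int (length xs)) #
        map (\<lambda>i. q powi part xs i * t powi (int (length xs) - int i)) [1..<length xs + 1]"
    by (auto simp: part_Cons_Suc)
  with Cons show ?case by simp
qed

context gen begin

lemma ratio_zero:
  assumes "0 \<le> part kap 1" "part kap 1 \<le> int x" "int x < part nu 1"
  shows "epochP_ratio q p t (1 / q powi int x) nu kap = 0"
proof -
  define k1 where "k1 = part kap 1"
  define n1 where "n1 = part nu 1"
  have len: "1 \<le> length nu" using assms(3) by (cases nu) (auto simp: part_def)
  define c where "c = q powi (k1 - int x)"
  have "c * q ^ nat (int x - k1) = 1"
    unfolding c_def using assms q0 k1_def
    by (simp add: power_int_of_nat[symmetric] power_int_add[symmetric])
  hence "ellE p (c * q ^ nat (int x - k1)) = 0" using ellE_one[OF np] by simp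
  moreover have "nat (int x - k1) < nat (n1 - k1)" using assms k1_def n1_def by simp
  ultimately have "(\<Prod>k<nat (n1 - k1). ellE p (c * q ^ k)) = 0"
    by (intro prod_zero) auto
  hence "epoch q p c (n1 - k1) = 0" using assms k1_def n1_def
    by (simp add: epoch_def)
  moreover have "1 / q powi int x * t powi (1 - int 1) * q powi k1 = c"
    unfolding c_def using q0 by (simp add: power_int_diff power_int_add field_simps)
  ultimately have "epoch q p (1 / q powi int x * t powi (1 - int 1) * q powi part kap 1)
                  (part nu 1 - part kap 1) = 0" using k1_def n1_def by simp
  thus ?thesis unfolding epochP_ratio_def using len
    by (intro prod_zero) (auto intro: bexI[of _ 1])
qed

lemma vanish:
  assumes "sorted_wrt (\<ge>) mu"
    and "Wm q p t nu (replicate N 0) (vs q t mu) a b \<noteq> 0"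
  shows "part nu i \<le> part mu i"
  using assms
proof (induction mu arbitrary: nu i)
  case Nil
  hence "nu = replicate N 0" by (auto split: if_splits)
  then show ?case by simp
next
  case (Cons x xs)
  let ?l = "int (length xs)"
  have y: "q powi int x * t powi ?l * t powi (- ?l) = q powi int x"
    using t0 by (simp add: power_int_minus field_simps)
  from Cons.prems(2) have "(\<Sum>kap\<in>{kap. interlace nu kap}.
         W1 q p t nu kap (q powi int x) (a * t powi (2 * ?l)) (b * t powi ?l)
         * Wm q p t kap (replicate N 0) (vs q t xs) a b) \<noteq> 0"
    unfolding vs.simps Wm_cons length_vs y .
  then obtain kap where kap: "interlace nu kap"
      "W1 q p t nu kap (q powi int x) (a * t powi (2 * ?l)) (b * t powi ?l) \<noteq> 0"
      "Wm q p t kap (replicate N 0) (vs q t xs) a b \<noteq> 0"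
    by (auto elim: sum.not_neutral_contains_not_neutral)
  have sxs: "sorted_wrt (\<ge>) xs" and xge: "\<forall>y\<in>set xs. y \<le> x" using Cons.prems(1) by auto
  have IH: "part kap j \<le> part xs j" for j using Cons.IH[OF sxs kap(3)] .
  have xs1: "part xs 1 \<le> int x"
    using xge by (cases xs) (auto simp: part_def)
  show ?case
  proof (cases i)
    case 0 then show ?thesis by simp
  next
    case (Suc j)
    show ?thesis
    proof (cases j)
      case 0
      show ?thesis
      proof (rule ccontr)
        assume "\<not> part nu i \<le> part (x # xs) i"
        hence "int x < part nu 1" using Suc 0 by simp
        moreover have "part kap 1 \<le> int x" using IH[of 1] xs1 by simp
        ultimately have "epochP_ratio q p t (1 / q powi int x) nu kap = 0"
          by (intro ratio_zero) auto
        hence "W1 q p t nu kap (q powi int x) (a * t powi (2 * ?l)) (b * t powi ?l) = 0"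
          by (simp add: W1_def Let_def)
        with kap(2) show False by simp
      qed
    next
      case (Suc j')
      hence "1 \<le> j" by simp
      have "part nu i \<le> part kap j" using interlace_part(2)[OF kap(1) \<open>1 \<le> j\<close>] \<open>i = Suc j\<close> by simp
      also have "\<dots> \<le> part xs j" by (rule IH)
      also have "\<dots> = part (x # xs) i" using \<open>i = Suc j\<close> \<open>1 \<le> j\<close> by (simp add: part_Cons_Suc)
      finally show ?thesis .
    qed
  qed
qed

end


definition RHSf :: "complex \<Rightarrow> complex \<Rightarrow> complex \<Rightarrow> complex \<Rightarrow> complex \<Rightarrow> nat list \<Rightarrow> complex" where
  "RHSf q p t a b lam = (let n = length lam; L = part lam; P = epoch q p; ii = int in
     (\<Prod>k\<in>{1..n}.
        (P (q * b * t powi (ii n - ii k)) (L k) * P (q * t powi (ii n - ii k)) (L k)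
         * P (a * t powi (2 * ii n - 2 * ii k)) (2 * L k))
        / (P ((a / b) * t powi (ii n - ii k)) (L k) * P (a * t powi (ii n - ii k)) (L k)
           * P (q * b * t powi (ii n + 1 - 2 * ii k)) (2 * L k))
        * t powi ((ii n + 1 - 2 * ii k) * L k))
     * (a / (q * b)) ^ sum_list lam
     * (\<Prod>i\<in>{1..n}. \<Prod>j\<in>{i+1..n}.
        (P (q * t powi (ii j - ii i - 1)) (L i - L j) * P (a * t powi (2 * ii n - ii i - ii j)) (L i + L j))
        / (P (q * t powi (ii j - ii i)) (L i - L j) * P (a * t powi (1 + 2 * ii n - ii i - ii j)) (L i + L j))))"

lemma part_append0: "part (l @ replicate k 0) i = part l i"
  by (auto simp: part_def nth_append)

lemma length_part_eq:
  assumes "length l1 = length l2" "\<And>i. 1 \<le> i \<Longrightarrow> part l1 i = part l2 i"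
  shows "l1 = l2"
proof (rule nth_equalityI)
  fix i assume "i < length l1"
  with assms(2)[of "Suc i"] assms(1) show "l1 ! i = l2 ! i" by (simp add: part_def)
qed (rule assms(1))

lemma interlace_by_part:
  assumes "length nu = length lam"
    "\<And>i. 1 \<le> i \<Longrightarrow> part nu i \<le> part lam i"
    "\<And>i. 1 \<le> i \<Longrightarrow> part lam (Suc i) \<le> part nu i"
  shows "interlace lam nu"
  unfolding interlace_def
proof (intro conjI allI impI)
  fix i assume i: "i < length lam"
  show "nu ! i \<le> lam ! i" using assms(2)[of "Suc i"] i assms(1) by (simp add: part_def)
  assume "Suc i < length lam"
  then show "lam ! Suc i \<le> nu ! i" using assms(3)[of "Suc i"] i assms(1) by (simp add: part_def)
qed (rule assms(1))

lemma part_sorted: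
  assumes "sorted_wrt (\<ge>) l" "1 \<le> i"
  shows "part l (Suc i) \<le> part l i"
  using assms by (auto simp: part_def sorted_wrt_iff_nth_less)



definition Kt :: "complex \<Rightarrow> complex \<Rightarrow> complex \<Rightarrow> complex \<Rightarrow> complex \<Rightarrow> int \<Rightarrow> int \<Rightarrow> int \<Rightarrow> complex" where
  "Kt q p t a b n k l =
        (epoch q p (q * b * t powi (n - k)) l * epoch q p (q * t powi (n - k)) l
         * epoch q p (a * t powi (2 * n - 2 * k)) (2 * l))
        / (epoch q p ((a / b) * t powi (n - k)) l * epoch q p (a * t powi (n - k)) l
           * epoch q p (q * b * t powi (n + 1 - 2 * k)) (2 * l))
        * t powi ((n + 1 - 2 * k) * l)"

definition Pt :: "complex \<Rightarrow> complex \<Rightarrow> complex \<Rightarrow> complex \<Rightarrow> int \<Rightarrow> int \<Rightarrow> int \<Rightarrow> int \<Rightarrow> int \<Rightarrow> complex" where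
  "Pt q p t a n i j li lj =
        (epoch q p (q * t powi (j - i - 1)) (li - lj) * epoch q p (a * t powi (2 * n - i - j)) (li + lj))
        / (epoch q p (q * t powi (j - i)) (li - lj) * epoch q p (a * t powi (1 + 2 * n - i - j)) (li + lj))"

lemma RHSf_alt:
  "RHSf q p t a b lam =
     (\<Prod>k\<in>{1..length lam}. Kt q p t a b (int (length lam)) (int k) (part lam k))
     * (a / (q * b)) ^ sum_list lam
     * (\<Prod>i\<in>{1..length lam}. \<Prod>j\<in>{i+1..length lam}.
          Pt q p t a (int (length lam)) (int i) (int j) (part lam i) (part lam j))"
  by (simp only: RHSf_def Kt_def Pt_def Let_def)

lemma prod_first: "(\<Prod>k\<in>{1..Suc m}. f k) = f 1 * (\<Prod>k\<in>{1..m}. f (Suc k))"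
proof -
  have "{1..Suc m} = insert 1 {Suc 1..Suc m}" by auto
  hence "(\<Prod>k\<in>{1..Suc m}. f k) = f 1 * (\<Prod>k\<in>{Suc 1..Suc m}. f k)" by simp
  also have "(\<Prod>k\<in>{Suc 1..Suc m}. f k) = (\<Prod>k\<in>{1..m}. f (Suc k))"
    by (rule prod.shift_bounds_cl_Suc_ivl)
  finally show ?thesis .
qed

lemma prod_pairs:
  "(\<Prod>i\<in>{1..Suc m}. \<Prod>j\<in>{i+1..Suc m}. f i j)
   = (\<Prod>k\<in>{1..m}. f 1 (Suc k)) * (\<Prod>i\<in>{1..m}. \<Prod>j\<in>{i+1..m}. f (Suc i) (Suc j))"
proof -
  have a: "(\<Prod>j\<in>{1+1..Suc m}. f 1 j) = (\<Prod>k\<in>{1..m}. f 1 (Suc k))"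
    using prod.shift_bounds_cl_Suc_ivl[of "f 1" 1 m] by simp
  have b: "(\<Prod>j\<in>{Suc i+1..Suc m}. f (Suc i) j) = (\<Prod>j\<in>{i+1..m}. f (Suc i) (Suc j))" for i
    using prod.shift_bounds_cl_Suc_ivl[of "f (Suc i)" "i+1" m] by simp
  show ?thesis unfolding prod_first[of "\<lambda>i. \<Prod>j\<in>{i+1..Suc m}. f i j"] a b ..
qed

context gen begin

lemma Kt_shift:
  "Kt q p t a b (int (Suc m)) (int (Suc k)) l
   = Kt q p t a b (int m) (int k) l
     * (epoch q p (q * b * t powi (int m + 1 - 2 * int k)) (2 * l)
        / epoch q p (q * b * t powi (int m - 2 * int k)) (2 * l)) * t powi (- l)"
proof -
  have nz: "epoch q p (q * b * t powi (int m + 1 - 2 * int k)) (2 * l) \<noteq> 0"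
    by (rule epoch_nz[where \<alpha>=1 and \<beta>="int m + 1 - 2 * int k" and \<gamma>=0 and \<delta>=1]) (auto simp: mnm_def mult_ac)
  have e1: "int (Suc m) - int (Suc k) = int m - int k" by simp
  have e2: "2 * int (Suc m) - 2 * int (Suc k) = 2 * int m - 2 * int k" by simp
  have e3: "int (Suc m) + 1 - 2 * int (Suc k) = int m - 2 * int k" by simp
  have e4: "t powi ((int m - 2 * int k) * l) = t powi ((int m + 1 - 2 * int k) * l) * t powi (- l)"
    using t0 by (simp add: power_int_add[symmetric] algebra_simps)
  show ?thesis unfolding Kt_def e1 e2 e3 e4 using nz by (simp add: field_simps)
qed

lemma Pt_shift:
  "Pt q p t a (int (Suc m)) (int (Suc i)) (int (Suc j)) li lj = Pt q p t a (int m) (int i) (int j) li lj"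
proof -
  have e1: "int (Suc j) - int (Suc i) = int j - int i" by simp
  have e2: "2 * int (Suc m) - int (Suc i) - int (Suc j) = 2 * int m - int i - int j" by simp
  have e3: "1 + 2 * int (Suc m) - int (Suc i) - int (Suc j) = 1 + 2 * int m - int i - int j" by simp
  show ?thesis unfolding Pt_def e1 e2 e3 ..
qed

definition "Kfirst m x = Kt q p t a b (int (Suc m)) 1 x"

lemma rhs_step:
  fixes x :: nat and xs :: "nat list"
  defines "m \<equiv> length xs"
  shows "RHSf q p t a b (x # xs) = RHSf q p t a b xs * Kfirst m (int x) * (a / (q * b)) ^ x
     * (\<Prod>k\<in>{1..m}. epoch q p (q * t powi (int k - 1)) (int x - part xs k)
                      / epoch q p (q * t powi (int k)) (int x - part xs k))
     * (\<Prod>k\<in>{1..m}. epoch q p (a * t powi (2 * int m - int k)) (int x + part xs k)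
                      / epoch q p (a * t powi (2 * int m + 1 - int k)) (int x + part xs k))
     * (\<Prod>k\<in>{1..m}. epoch q p (q * b * t powi (int m + 1 - 2 * int k)) (2 * part xs k)
                      / epoch q p (q * b * t powi (int m - 2 * int k)) (2 * part xs k))
     * (\<Prod>k\<in>{1..m}. t powi (- part xs k))"
proof -
  have len: "length (x # xs) = Suc m" unfolding m_def by simp
  have L: "part (x # xs) (Suc k) = part xs k" if "k \<in> {1..m}" for k
    using that by (simp add: part_Cons_Suc)
  have K: "(\<Prod>k\<in>{1..length (x # xs)}. Kt q p t a b (int (length (x # xs))) (int k) (part (x # xs) k))
      = Kfirst m (int x) * (\<Prod>k\<in>{1..m}. Kt q p t a b (int m) (int k) (part xs k))
        * (\<Prod>k\<in>{1..m}. epoch q p (q * b * t powi (int m + 1 - 2 * int k)) (2 * part xs k)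
                      / epoch q p (q * b * t powi (int m - 2 * int k)) (2 * part xs k))
        * (\<Prod>k\<in>{1..m}. t powi (- part xs k))"
  proof -
    have "(\<Prod>k\<in>{1..m}. Kt q p t a b (int (Suc m)) (int (Suc k)) (part (x # xs) (Suc k)))
      = (\<Prod>k\<in>{1..m}. Kt q p t a b (int m) (int k) (part xs k)
        * (epoch q p (q * b * t powi (int m + 1 - 2 * int k)) (2 * part xs k)
                      / epoch q p (q * b * t powi (int m - 2 * int k)) (2 * part xs k))
        * t powi (- part xs k))"
      by (rule prod.cong[OF refl]) (simp only: Kt_shift L)
    also have "\<dots> = (\<Prod>k\<in>{1..m}. Kt q p t a b (int m) (int k) (part xs k))
        * (\<Prod>k\<in>{1..m}. epoch q p (q * b * t powi (int m + 1 - 2 * int k)) (2 * part xs k)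
                      / epoch q p (q * b * t powi (int m - 2 * int k)) (2 * part xs k))
        * (\<Prod>k\<in>{1..m}. t powi (- part xs k))"
      by (simp only: prod.distrib)
    finally show ?thesis unfolding len prod_first Kfirst_def by (simp add: mult_ac)
  qed
  have Pr: "(\<Prod>i\<in>{1..length (x # xs)}. \<Prod>j\<in>{i+1..length (x # xs)}.
          Pt q p t a (int (length (x # xs))) (int i) (int j) (part (x # xs) i) (part (x # xs) j))
      = (\<Prod>k\<in>{1..m}. epoch q p (q * t powi (int k - 1)) (int x - part xs k)
                      / epoch q p (q * t powi (int k)) (int x - part xs k))
        * (\<Prod>k\<in>{1..m}. epoch q p (a * t powi (2 * int m - int k)) (int x + part xs k)
                      / epoch q p (a * t powi (2 * int m + 1 - int k)) (int x + part xs k))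
        * (\<Prod>i\<in>{1..m}. \<Prod>j\<in>{i+1..m}. Pt q p t a (int m) (int i) (int j) (part xs i) (part xs j))"
  proof -
    have P1: "Pt q p t a (int (Suc m)) (int 1) (int (Suc k)) (part (x # xs) 1) (part (x # xs) (Suc k))
       = epoch q p (q * t powi (int k - 1)) (int x - part xs k)
                      / epoch q p (q * t powi (int k)) (int x - part xs k)
         * (epoch q p (a * t powi (2 * int m - int k)) (int x + part xs k)
                      / epoch q p (a * t powi (2 * int m + 1 - int k)) (int x + part xs k))"
      if "k \<in> {1..m}" for k
    proof -
      have e1: "int (Suc k) - int 1 - 1 = int k - 1" "int (Suc k) - int 1 = int k" by simp_all
      have e2: "2 * int (Suc m) - int 1 - int (Suc k) = 2 * int m - int k"
               "1 + 2 * int (Suc m) - int 1 - int (Suc k) = 2 * int m + 1 - int k" by simp_all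
      show ?thesis unfolding Pt_def e1 e2 L[OF that] by (simp add: times_divide_times_eq)
    qed
    have P2: "(\<Prod>j\<in>{i + 1..m}. Pt q p t a (int (Suc m)) (int (Suc i)) (int (Suc j))
                  (part (x # xs) (Suc i)) (part (x # xs) (Suc j)))
          = (\<Prod>j\<in>{i + 1..m}. Pt q p t a (int m) (int i) (int j) (part xs i) (part xs j))"
      if "i \<in> {1..m}" for i
    proof (rule prod.cong[OF refl])
      fix j assume "j \<in> {i + 1..m}"
      hence j: "j \<in> {1..m}" by simp
      show "Pt q p t a (int (Suc m)) (int (Suc i)) (int (Suc j)) (part (x # xs) (Suc i)) (part (x # xs) (Suc j))
          = Pt q p t a (int m) (int i) (int j) (part xs i) (part xs j)"
        by (simp only: Pt_shift L[OF that] L[OF j])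
    qed
    have Q1: "(\<Prod>k\<in>{1..m}. Pt q p t a (int (Suc m)) (int 1) (int (Suc k)) (part (x # xs) 1) (part (x # xs) (Suc k)))
      = (\<Prod>k\<in>{1..m}. epoch q p (q * t powi (int k - 1)) (int x - part xs k)
                      / epoch q p (q * t powi (int k)) (int x - part xs k))
        * (\<Prod>k\<in>{1..m}. epoch q p (a * t powi (2 * int m - int k)) (int x + part xs k)
                      / epoch q p (a * t powi (2 * int m + 1 - int k)) (int x + part xs k))"
      unfolding prod.distrib[symmetric] by (rule prod.cong[OF refl]) (rule P1)
    have Q2: "(\<Prod>i\<in>{1..m}. \<Prod>j\<in>{i + 1..m}. Pt q p t a (int (Suc m)) (int (Suc i)) (int (Suc j))
                  (part (x # xs) (Suc i)) (part (x # xs) (Suc j)))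
       = (\<Prod>i\<in>{1..m}. \<Prod>j\<in>{i+1..m}. Pt q p t a (int m) (int i) (int j) (part xs i) (part xs j))"
      by (rule prod.cong[OF refl]) (rule P2)
    show ?thesis unfolding len prod_pairs[where m=m] Q1[unfolded of_nat_1] Q2[unfolded of_nat_1] of_nat_1 ..
  qed
  show ?thesis
    unfolding RHSf_alt[of _ _ _ _ _ "x # xs"] RHSf_alt[of _ _ _ _ _ xs] K Pr
    by (simp add: power_add m_def mult_ac)
qed

end


lemma tele1:
  fixes g h :: "nat \<Rightarrow> 'a::field"
  shows "(\<Prod>i\<in>{1..Suc m}. g i / h i) = g (Suc m) / h 1 * (\<Prod>k\<in>{1..m}. g k / h (Suc k))"
proof (induction m)
  case 0 then show ?case by simp
next
  case (Suc m)
  have "(\<Prod>i\<in>{1..Suc (Suc m)}. g i / h i) = (\<Prod>i\<in>{1..Suc m}. g i / h i) * (g (Suc (Suc m)) / h (Suc (Suc m)))"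
    by (simp add: atLeastAtMostSuc_conv ac_simps)
  also have "\<dots> = g (Suc (Suc m)) / h 1 * ((\<Prod>k\<in>{1..m}. g k / h (Suc k)) * (g (Suc m) / h (Suc (Suc m))))"
    unfolding Suc by (simp add: field_simps)
  also have "(\<Prod>k\<in>{1..m}. g k / h (Suc k)) * (g (Suc m) / h (Suc (Suc m))) = (\<Prod>k\<in>{1..Suc m}. g k / h (Suc k))"
    by (simp add: atLeastAtMostSuc_conv)
  finally show ?case .
qed

lemma tele2:
  fixes g h :: "nat \<Rightarrow> 'a::field"
  shows "(\<Prod>i\<in>{1..Suc m}. g i / h i) = g 1 / h (Suc m) * (\<Prod>k\<in>{1..m}. g (Suc k) / h k)"
proof (induction m)
  case 0 then show ?case by simp
next
  case (Suc m)
  have "(\<Prod>i\<in>{1..Suc (Suc m)}. g i / h i) = (\<Prod>i\<in>{1..Suc m}. g i / h i) * (g (Suc (Suc m)) / h (Suc (Suc m)))"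
    by (simp add: atLeastAtMostSuc_conv ac_simps)
  also have "\<dots> = g 1 / h (Suc (Suc m)) * ((\<Prod>k\<in>{1..m}. g (Suc k) / h k) * (g (Suc (Suc m)) / h (Suc m)))"
    unfolding Suc by (simp add: field_simps)
  also have "(\<Prod>k\<in>{1..m}. g (Suc k) / h k) * (g (Suc (Suc m)) / h (Suc m)) = (\<Prod>k\<in>{1..Suc m}. g (Suc k) / h k)"
    by (simp add: atLeastAtMostSuc_conv)
  finally show ?case .
qed

lemma prod_restrict:
  fixes m N :: nat
  assumes "m \<le> N" "\<And>i. m < i \<Longrightarrow> i \<le> N \<Longrightarrow> f i = 1"
  shows "(\<Prod>i\<in>{1..N}. f i) = (\<Prod>i\<in>{1..m}. f i)"
  using assms by (intro prod.mono_neutral_right) auto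

lemma prod_powi:
  fixes t :: "'a::field"
  assumes "t \<noteq> 0" "finite A"
  shows "(\<Prod>i\<in>A. t powi f i) = t powi (\<Sum>i\<in>A. f i)"
  using assms(2) by (induction A rule: finite_induct) (simp_all add: power_int_add assms(1))

lemma sum_abel:
  fixes L :: "nat \<Rightarrow> int"
  shows "(\<Sum>i\<in>{1..Suc m}. (int i - 1) * (L i - L (Suc i)))
         = (\<Sum>k\<in>{1..m}. L (Suc k)) - int m * L (Suc (Suc m))"
proof (induction m)
  case 0 then show ?case by simp
next
  case (Suc m)
  have "(\<Sum>i\<in>{1..Suc (Suc m)}. (int i - 1) * (L i - L (Suc i)))
       = (\<Sum>i\<in>{1..Suc m}. (int i - 1) * (L i - L (Suc i))) + int (Suc m) * (L (Suc (Suc m)) - L (Suc (Suc (Suc m))))"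
    by (simp add: atLeastAtMostSuc_conv)
  also have "\<dots> = (\<Sum>k\<in>{1..Suc m}. L (Suc k)) - int (Suc m) * L (Suc (Suc (Suc m)))"
    unfolding Suc by (simp add: atLeastAtMostSuc_conv algebra_simps)
  finally show ?case .
qed



lemma epoch_zero[simp]: "epoch q p c 0 = 1"
  by (simp add: epoch_def)

lemma Hfac_one:
  assumes "\<And>j. 2 \<le> j \<Longrightarrow> part mu (j - 1) = part lam j"
  shows "Hfac q p t b lam mu = 1"
proof -
  have z: "part mu (j - Suc 0) - part lam j = 0" if "2 \<le> j" for j using assms[OF that] by simp
  show ?thesis unfolding Hfac_def Let_def
    apply (rule trans[where s="1 * 1"])
     apply (rule arg_cong2[where f="(*)"])
      apply (intro prod.neutral ballI, auto simp: z)[1]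
     apply (intro prod.neutral ballI, auto simp: z)[1]
    by simp
qed



definition SSf :: "complex \<Rightarrow> complex \<Rightarrow> complex \<Rightarrow> complex \<Rightarrow> nat list \<Rightarrow> nat list \<Rightarrow> complex" where
  "SSf q p t b lam mu = (let n = length lam; L = part lam; M = part mu; P = epoch q p; ii = int in
       (\<Prod>i\<in>{1..n}.
           ellE p (b * t powi (1 - 2 * ii i) * q powi (2 * M i)) / ellE p (b * t powi (1 - 2 * ii i))
           * P (b * t powi (1 - 2 * ii i)) (M i + L (i + 1))
           / P (b * q * t powi (- 2 * ii i)) (M i + L (i + 1))
           * t powi (ii i * (M i - L (i + 1)))))"

lemma W1_unf:
  assumes "interlace lam mu"
  shows "W1 q p t lam mu x a b = Hfac q p t b lam mu
       * epochP_ratio q p t (1 / x) lam mu * epochP_ratio q p t (a * x) lam mu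
       * (epochP q p t (q * b * x / t) mu * epochP q p t (q * b / (a * x * t)) mu)
       / (epochP q p t (q * b * x) lam * epochP q p t (q * b / (a * x)) lam)
       * SSf q p t b lam mu"
  unfolding W1_def SSf_def Let_def if_P[OF assms] ..

locale stepctx = gen +
  fixes x :: nat and xs :: "nat list" and N :: nat
  assumes srt: "sorted_wrt (\<ge>) (x # xs)" and lenN: "length (x # xs) \<le> N"
begin

definition "m = length xs"
definition "nu = (x # xs) @ replicate (N - length (x # xs)) 0"
definition "kap = xs @ replicate (N - length xs) 0"
definition "L = part (x # xs)"

lemma mN: "Suc m \<le> N" using lenN by (simp add: m_def)
lemma len_nu: "length nu = N" using lenN by (simp add: nu_def)
lemma len_kap: "length kap = N" using lenN by (simp add: kap_def)
lemma part_nu: "part nu i = L i" by (simp add: nu_def L_def part_append0 del: append.simps)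
lemma part_kap: "1 \<le> i \<Longrightarrow> part kap i = L (Suc i)"
  by (simp add: kap_def L_def part_append0 part_Cons_Suc)
lemma L1: "L (Suc 0) = int x" by (simp add: L_def)
lemma L_big: "Suc m < i \<Longrightarrow> L i = 0" by (simp add: L_def m_def part_big)
lemma L_mono: "1 \<le> i \<Longrightarrow> L (Suc i) \<le> L i" unfolding L_def by (rule part_sorted[OF srt])
lemma L_nonneg: "0 \<le> L i" by (simp add: L_def)
lemma L_Suc: "1 \<le> k \<Longrightarrow> L (Suc k) = part xs k" by (simp add: L_def part_Cons_Suc)
lemma L_le1: "L i \<le> int x"
proof -
  have all: "\<forall>y\<in>set xs. y \<le> x" using srt by simp
  show ?thesis
  proof (cases "2 \<le> i \<and> i \<le> Suc m")
    case True
    hence "L i = int (xs ! (i - Suc (Suc 0)))" "i - Suc (Suc 0) < length xs"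
      by (auto simp: L_def part_def m_def nth_Cons')
    with all show ?thesis by auto
  next
    case False
    hence "i = 0 \<or> i = 1 \<or> i > Suc m" by auto
    then show ?thesis by (auto simp: L_def part_def m_def)
  qed
qed

lemma interl: "interlace nu kap"
proof (rule interlace_by_part)
  show "length kap = length nu" using len_nu len_kap by simp
  fix i :: nat assume i: "1 \<le> i"
  show "part nu (Suc i) \<le> part kap i" using part_kap[OF i] part_nu by simp
  show "part kap i \<le> part nu i" using part_kap[OF i] part_nu L_mono[OF i] by simp
qed

lemma powi_split: "e = e1 + e2 \<Longrightarrow> t powi e = t powi e1 * t powi e2"
  using t0 by (simp add: power_int_add)

lemma targ: "c / t * t powi (1 - int i) = c * t powi (1 - int (Suc i))"
proof -
  have "t powi (1 - int i) = t powi (1 - int (Suc i)) * t powi 1" by (rule powi_split) simp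
  thus ?thesis using t0 by (simp add: field_simps)
qed

lemma epochP_shift: "epochP q p t c nu = epoch q p c (int x) * epochP q p t (c / t) kap"
proof -
  obtain N' where N: "N = Suc N'" using mN by (cases N) auto
  define f where "f i = epoch q p (c * t powi (1 - int i)) (L i)" for i
  have 1: "epochP q p t c nu = (\<Prod>i\<in>{1..N}. f i)"
    unfolding epochP_def len_nu f_def part_nu ..
  have 2: "epochP q p t (c / t) kap = (\<Prod>i\<in>{1..N}. f (Suc i))"
    unfolding epochP_def len_kap
  proof (rule prod.cong[OF refl])
    fix i assume "i \<in> {1..N}"
    hence "1 \<le> i" by simp
    show "epoch q p (c / t * t powi (1 - int i)) (part kap i) = f (Suc i)"
      unfolding targ part_kap[OF \<open>1 \<le> i\<close>] f_def ..
  qed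
  have 3: "f (Suc N) = 1" using L_big[of "Suc N"] mN by (simp add: f_def)
  have 4: "(\<Prod>i\<in>{1..N}. f (Suc i)) = (\<Prod>i\<in>{1..N'}. f (Suc i))"
    using 3 unfolding N by (simp add: atLeastAtMostSuc_conv)
  have 5: "(\<Prod>i\<in>{1..N}. f i) = f 1 * (\<Prod>i\<in>{1..N'}. f (Suc i))"
    unfolding N by (rule prod_first)
  have 6: "f 1 = epoch q p c (int x)" using L1 by (simp add: f_def)
  show ?thesis unfolding 1 2 4 5 6 ..
qed

lemma SS_eval:
  "SSf q p t (b * t powi int m) nu kap =
     (\<Prod>k\<in>{1..m}. epoch q p (q * b * t powi (int m + 1 - 2 * int k)) (2 * part xs k)
                      / epoch q p (q * b * t powi (int m - 2 * int k)) (2 * part xs k))"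
proof -
  define y where "y i = b * t powi int m * t powi (1 - 2 * int i)" for i
  have Ey: "ellE p (y i) \<noteq> 0" for i
  proof (rule ellE_nz'[where \<alpha>=0 and \<beta>="int m + 1 - 2 * int i" and \<gamma>=0 and \<delta>=1])
    have "mnm q t a b 0 (int m + 1 - 2 * int i) 0 1 = b * (t powi int m * t powi (1 - 2 * int i))"
      unfolding mnm_def using powi_split[of "int m + 1 - 2 * int i" "int m" "1 - 2 * int i"] by simp
    thus "y i = mnm q t a b 0 (int m + 1 - 2 * int i) 0 1" by (simp add: y_def mult_ac)
  qed simp
  define g where "g i = epoch q p (y i * q) (2 * L (Suc i)) / epoch q p (b * t powi int m * q * t powi (- 2 * int i)) (2 * L (Suc i))" for i
  have "SSf q p t (b * t powi int m) nu kap = (\<Prod>i\<in>{1..N}. g i)"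
    unfolding SSf_def Let_def len_nu
  proof (rule prod.cong[OF refl])
    fix i assume "i \<in> {1..N}"
    hence pk: "part kap i = L (Suc i)" "part nu (i + 1) = L (Suc i)" using part_kap part_nu by auto
    have l0: "0 \<le> L (Suc i)" by (rule L_nonneg)
    have sh: "epoch q p (y i) (int (nat (2 * L (Suc i)))) * ellE p (y i * q ^ nat (2 * L (Suc i)))
        = ellE p (y i) * epoch q p (y i * q) (int (nat (2 * L (Suc i))))" by (rule epoch_shift_nat)
    have e1: "int (nat (2 * L (Suc i))) = L (Suc i) + L (Suc i)" using l0 by simp
    have e2: "q ^ nat (2 * L (Suc i)) = q powi (2 * L (Suc i))" using l0 by (simp add: power_int_nonneg_exp)
    show "ellE p (b * t powi int m * t powi (1 - 2 * int i) * q powi (2 * part kap i)) /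
          ellE p (b * t powi int m * t powi (1 - 2 * int i)) *
          epoch q p (b * t powi int m * t powi (1 - 2 * int i)) (part kap i + part nu (i + 1)) /
          epoch q p (b * t powi int m * q * t powi (- 2 * int i)) (part kap i + part nu (i + 1)) *
          t powi (int i * (part kap i - part nu (i + 1))) = g i"
      unfolding pk g_def
      using sh Ey[of i] unfolding e1 e2 y_def
      by (simp add: field_simps)
  qed
  also have "\<dots> = (\<Prod>i\<in>{1..m}. g i)"
  proof (rule prod_restrict)
    show "m \<le> N" using mN by simp
    fix i assume "m < i" "i \<le> N"
    hence "L (Suc i) = 0" by (intro L_big) simp
    thus "g i = 1" by (simp add: g_def)
  qed
  also have "\<dots> = (\<Prod>k\<in>{1..m}. epoch q p (q * b * t powi (int m + 1 - 2 * int k)) (2 * part xs k)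
                      / epoch q p (q * b * t powi (int m - 2 * int k)) (2 * part xs k))"
  proof (rule prod.cong[OF refl])
    fix k assume "k \<in> {1..m}"
    hence lk: "L (Suc k) = part xs k" by (intro L_Suc) simp
    have a1: "y k * q = q * b * t powi (int m + 1 - 2 * int k)"
      using powi_split[of "int m + 1 - 2 * int k" "int m" "1 - 2 * int k"] by (simp add: y_def mult_ac)
    have a2: "b * t powi int m * q * t powi (- 2 * int k) = q * b * t powi (int m - 2 * int k)"
      using powi_split[of "int m - 2 * int k" "int m" "- 2 * int k"] by (simp add: mult_ac)
    show "g k = epoch q p (q * b * t powi (int m + 1 - 2 * int k)) (2 * part xs k)
                      / epoch q p (q * b * t powi (int m - 2 * int k)) (2 * part xs k)"
      unfolding g_def a1 a2 lk ..
  qed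
  finally show ?thesis .
qed

lemma R2_eval:
  "epochP_ratio q p t (a * t powi (2 * int m) * q powi int x) nu kap
   = epoch q p (a * t powi (2 * int m)) (2 * int x) / epoch q p (a * t powi int m) (int x)
     * (\<Prod>k\<in>{1..m}. epoch q p (a * t powi (2 * int m - int k)) (int x + part xs k)
                      / epoch q p (a * t powi (2 * int m + 1 - int k)) (int x + part xs k))"
proof -
  define Aa where "Aa = a * t powi (2 * int m)"
  define c where "c i = Aa * t powi (1 - int i)" for i
  define ga where "ga i = epoch q p (c i) (int x + L i)" for i
  define ha where "ha i = epoch q p (c i) (int x + L (Suc i))" for i
  have c_mono: "c i = mnm q t a b 0 (2 * int m + 1 - int i) 1 0" for i
    unfolding c_def Aa_def mnm_def using powi_split[of "2 * int m + 1 - int i" "2 * int m" "1 - int i"]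
    by (simp add: mult_ac)
  have ha_nz: "ha i \<noteq> 0" for i unfolding ha_def by (rule epoch_nz[OF c_mono]) simp
  have "epochP_ratio q p t (Aa * q powi int x) nu kap
     = (\<Prod>i\<in>{1..N}. epoch q p (Aa * q powi int x * t powi (1 - int i) * q powi L (Suc i)) (L i - L (Suc i)))"
    unfolding epochP_ratio_def len_nu
  proof (rule prod.cong[OF refl])
    fix i assume "i \<in> {1..N}"
    hence "1 \<le> i" by simp
    show "epoch q p (Aa * q powi int x * t powi (1 - int i) * q powi part kap i) (part nu i - part kap i)
        = epoch q p (Aa * q powi int x * t powi (1 - int i) * q powi L (Suc i)) (L i - L (Suc i))"
      unfolding part_kap[OF \<open>1 \<le> i\<close>] part_nu ..
  qed
  also have "\<dots> = (\<Prod>i\<in>{1..Suc m}. epoch q p (Aa * q powi int x * t powi (1 - int i) * q powi L (Suc i)) (L i - L (Suc i)))"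
  proof (rule prod_restrict)
    show "Suc m \<le> N" by (rule mN)
    fix i assume "Suc m < i" "i \<le> N"
    hence "L i = 0" "L (Suc i) = 0" by (auto intro: L_big)
    thus "epoch q p (Aa * q powi int x * t powi (1 - int i) * q powi L (Suc i)) (L i - L (Suc i)) = 1" by simp
  qed
  also have "\<dots> = (\<Prod>i\<in>{1..Suc m}. ga i / ha i)"
  proof (rule prod.cong[OF refl])
    fix i assume i: "i \<in> {1..Suc m}"
    have sp: "epoch q p (c i) ((int x + L (Suc i)) + (L i - L (Suc i)))
        = epoch q p (c i) (int x + L (Suc i)) * epoch q p (c i * q powi (int x + L (Suc i))) (L i - L (Suc i))"
      by (rule epoch_split) (use L_nonneg[of "Suc i"] L_mono[of i] i in auto)
    have arg: "c i * q powi (int x + L (Suc i)) = Aa * q powi int x * t powi (1 - int i) * q powi L (Suc i)"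
      unfolding c_def using q0 by (simp add: power_int_add mult_ac)
    have "ga i = ha i * epoch q p (Aa * q powi int x * t powi (1 - int i) * q powi L (Suc i)) (L i - L (Suc i))"
      using sp unfolding arg ga_def ha_def by simp
    thus "epoch q p (Aa * q powi int x * t powi (1 - int i) * q powi L (Suc i)) (L i - L (Suc i)) = ga i / ha i"
      using ha_nz[of i] by (simp add: field_simps)
  qed
  also have "\<dots> = ga 1 / ha (Suc m) * (\<Prod>k\<in>{1..m}. ga (Suc k) / ha k)" by (rule tele2)
  also have "ga 1 = epoch q p (a * t powi (2 * int m)) (2 * int x)"
    unfolding ga_def c_def Aa_def using L1 by simp
  also have "ha (Suc m) = epoch q p (a * t powi int m) (int x)"
  proof -
    have "c (Suc m) = a * t powi int m"
      unfolding c_def Aa_def using powi_split[of "int m" "2 * int m" "1 - int (Suc m)"] by (simp add: mult_ac)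
    thus ?thesis unfolding ha_def using L_big[of "Suc (Suc m)"] by simp
  qed
  also have "(\<Prod>k\<in>{1..m}. ga (Suc k) / ha k) = (\<Prod>k\<in>{1..m}. epoch q p (a * t powi (2 * int m - int k)) (int x + part xs k)
                      / epoch q p (a * t powi (2 * int m + 1 - int k)) (int x + part xs k))"
  proof (rule prod.cong[OF refl])
    fix k assume "k \<in> {1..m}"
    hence lk: "L (Suc k) = part xs k" by (intro L_Suc) simp
    have c1: "c (Suc k) = a * t powi (2 * int m - int k)"
      unfolding c_def Aa_def using powi_split[of "2 * int m - int k" "2 * int m" "1 - int (Suc k)"] by (simp add: mult_ac)
    have c2: "c k = a * t powi (2 * int m + 1 - int k)"
      unfolding c_def Aa_def using powi_split[of "2 * int m + 1 - int k" "2 * int m" "1 - int k"] by (simp add: mult_ac)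
    show "ga (Suc k) / ha k = epoch q p (a * t powi (2 * int m - int k)) (int x + part xs k)
                      / epoch q p (a * t powi (2 * int m + 1 - int k)) (int x + part xs k)"
      unfolding ga_def ha_def c1 c2 lk ..
  qed
  finally show ?thesis unfolding Aa_def .
qed

definition HH :: "nat \<Rightarrow> complex" where "HH v = (\<Prod>u<v. - (1 / q ^ Suc u))"

lemma HH_nz: "HH v \<noteq> 0" unfolding HH_def using q0 by (simp add: prod_zero_iff)

lemma HH_add: "HH (s + d) = HH s * (\<Prod>r<d. - (1 / q ^ Suc (s + r)))"
  by (induction d) (simp_all add: HH_def mult_ac)

lemma R1_eval:
  "epochP_ratio q p t (1 / q powi int x) nu kap
   = HH x * (\<Prod>k\<in>{1..m}. t powi (- part xs k)) * epoch q p (q * t powi int m) (int x)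
     * (\<Prod>k\<in>{1..m}. epoch q p (q * t powi (int k - 1)) (int x - part xs k)
                      / epoch q p (q * t powi (int k)) (int x - part xs k))"
proof -
  define cc where "cc i = 1 / q powi int x * t powi (1 - int i) * q powi L (Suc i)" for i
  define d where "d i = nat (L i - L (Suc i))" for i
  define s where "s i = nat (int x - L i)" for i
  define g where "g i = epoch q p (q * t powi (int i - 1)) (int x - L (Suc i))" for i
  define h where "h i = epoch q p (q * t powi (int i - 1)) (int x - L i)" for i
  define A where "A i = HH (s (Suc i)) / HH (s i)" for i
  define B where "B i = t powi ((1 - int i) * (L i - L (Suc i)))" for i
  have "epochP_ratio q p t (1 / q powi int x) nu kap = (\<Prod>i\<in>{1..N}. epoch q p (cc i) (L i - L (Suc i)))"
    unfolding epochP_ratio_def len_nu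
  proof (rule prod.cong[OF refl])
    fix i assume "i \<in> {1..N}"
    hence "1 \<le> i" by simp
    show "epoch q p (1 / q powi int x * t powi (1 - int i) * q powi part kap i) (part nu i - part kap i)
        = epoch q p (cc i) (L i - L (Suc i))"
      unfolding part_kap[OF \<open>1 \<le> i\<close>] part_nu cc_def ..
  qed
  also have "\<dots> = (\<Prod>i\<in>{1..Suc m}. epoch q p (cc i) (L i - L (Suc i)))"
  proof (rule prod_restrict)
    show "Suc m \<le> N" by (rule mN)
    fix i assume "Suc m < i" "i \<le> N"
    hence "L i = 0" "L (Suc i) = 0" by (auto intro: L_big)
    thus "epoch q p (cc i) (L i - L (Suc i)) = 1" by simp
  qed
  also have "\<dots> = (\<Prod>i\<in>{1..Suc m}. A i * B i * (g i / h i))"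
  proof (rule prod.cong[OF refl])
    fix i assume i: "i \<in> {1..Suc m}"
    have Li: "L (Suc i) \<le> L i" using L_mono[of i] i by simp
    have d_eq: "int (d i) = L i - L (Suc i)" using Li by (simp add: d_def)
    have s_eq: "int (s i) = int x - L i" using L_le1[of i] by (simp add: s_def)
    have s'_eq: "s (Suc i) = s i + d i" using L_le1[of i] L_le1[of "Suc i"] Li
      by (simp add: s_def d_def nat_diff_distrib' nat_add_distrib[symmetric])
    define w where "w = q powi (int x - L i + 1) * t powi (int i - 1)"
    have w0: "w \<noteq> 0" using q0 t0 by (simp add: w_def)
    have ccw: "cc i = q powi (1 - int (d i)) / w"
    proof -
      have e: "1 - int (d i) = (L (Suc i) - int x) + (int x - L i + 1)" by (simp add: d_eq)
      have "q powi (1 - int (d i)) = q powi (L (Suc i) - int x) * q powi (int x - L i + 1)"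
        unfolding e by (rule power_int_add) (use q0 in simp)
      moreover have "t powi (1 - int i) * t powi (int i - 1) = 1"
        using t0 by (simp add: power_int_add[symmetric])
      moreover have "q powi (L (Suc i) - int x) = 1 / q powi int x * q powi L (Suc i)"
        using q0 by (simp add: power_int_diff)
      ultimately show ?thesis unfolding cc_def w_def using q0 t0
        by (simp add: field_simps)
    qed
    have rfl: "epoch q p (cc i) (int (d i)) = (\<Prod>r<d i. - (1 / (w * q ^ r))) * epoch q p w (int (d i))"
      by (rule epoch_refl_nat[OF w0 ccw])
    have sgn: "(\<Prod>r<d i. - (1 / (w * q ^ r))) = A i * B i"
    proof -
      have "- (1 / (w * q ^ r)) = - (1 / q ^ Suc (s i + r)) * t powi (1 - int i)" for r
      proof -
        have e: "int x - L i + 1 = int (Suc (s i))" using s_eq by simp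
        have "q powi (int x - L i + 1) = q ^ Suc (s i)" unfolding e by (rule power_int_of_nat)
        hence "w * q ^ r = q ^ Suc (s i + r) * t powi (int i - 1)"
          unfolding w_def by (simp add: power_add mult_ac)
        moreover have "t powi (1 - int i) = 1 / t powi (int i - 1)"
          using t0 by (simp add: power_int_minus_divide[symmetric])
        ultimately show ?thesis by simp
      qed
      hence "(\<Prod>r<d i. - (1 / (w * q ^ r))) = (\<Prod>r<d i. - (1 / q ^ Suc (s i + r)) * t powi (1 - int i))"
        by (intro prod.cong[OF refl])
      also have "\<dots> = (\<Prod>r<d i. - (1 / q ^ Suc (s i + r))) * (t powi (1 - int i)) ^ d i"
        by (simp only: prod.distrib prod_constant card_lessThan)
      also have "(\<Prod>r<d i. - (1 / q ^ Suc (s i + r))) = A i"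
        unfolding A_def s'_eq HH_add using HH_nz[of "s i"] by simp
      also have "(t powi (1 - int i)) ^ d i = B i"
        unfolding B_def power_int_power' d_eq ..
      finally show ?thesis .
    qed
    have hnz: "h i \<noteq> 0"
    proof (cases "i = 1")
      case True then show ?thesis using L1 by (simp add: h_def)
    next
      case False
      with i have "int i - 1 \<noteq> 0" by simp
      show ?thesis unfolding h_def
        by (rule epoch_nz[where \<alpha>=1 and \<beta>="int i - 1" and \<gamma>=0 and \<delta>=0])
           (use \<open>int i - 1 \<noteq> 0\<close> in \<open>simp_all add: mnm_def\<close>)
    qed
    have gh: "epoch q p w (int (d i)) = g i / h i"
    proof -
      have "g i = h i * epoch q p (q * t powi (int i - 1) * q powi (int x - L i)) (L i - L (Suc i))"
        unfolding g_def h_def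
        using epoch_split[of "int x - L i" "L i - L (Suc i)" "q * t powi (int i - 1)"] L_le1[of i] Li
        by simp
      moreover have "q * t powi (int i - 1) * q powi (int x - L i) = w"
        unfolding w_def using q0 by (simp add: power_int_add mult_ac)
      ultimately show ?thesis using hnz unfolding d_eq by (simp add: field_simps)
    qed
    have "epoch q p (cc i) (L i - L (Suc i)) = epoch q p (cc i) (int (d i))" unfolding d_eq ..
    also note rfl
    finally show "epoch q p (cc i) (L i - L (Suc i)) = A i * B i * (g i / h i)"
      unfolding sgn gh .
  qed
  also have "\<dots> = (\<Prod>i\<in>{1..Suc m}. A i) * (\<Prod>i\<in>{1..Suc m}. B i) * (\<Prod>i\<in>{1..Suc m}. g i / h i)"
    by (simp only: prod.distrib)
  also have "(\<Prod>i\<in>{1..Suc m}. A i) = HH x"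
  proof -
    have "(\<Prod>i\<in>{1..Suc m}. A i) = HH (s (Suc (Suc m))) / HH (s 1) * (\<Prod>k\<in>{1..m}. HH (s (Suc k)) / HH (s (Suc k)))"
      unfolding A_def by (rule tele1)
    also have "\<dots> = HH x" using L1 L_big[of "Suc (Suc m)"] HH_nz by (simp add: s_def HH_def)
    finally show ?thesis .
  qed
  also have "(\<Prod>i\<in>{1..Suc m}. B i) = (\<Prod>k\<in>{1..m}. t powi (- part xs k))"
  proof -
    have "(\<Prod>i\<in>{1..Suc m}. B i) = t powi (\<Sum>i\<in>{1..Suc m}. (1 - int i) * (L i - L (Suc i)))"
      unfolding B_def by (rule prod_powi[OF t0]) simp
    also have "(\<Sum>i\<in>{1..Suc m}. (1 - int i) * (L i - L (Suc i))) = - (\<Sum>i\<in>{1..Suc m}. (int i - 1) * (L i - L (Suc i)))"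
      unfolding sum_negf[symmetric] by (rule sum.cong[OF refl]) (simp add: algebra_simps)
    also have "\<dots> = (\<Sum>k\<in>{1..m}. - L (Suc k))"
      unfolding sum_abel using L_big[of "Suc (Suc m)"] by (simp add: sum_negf)
    also have "t powi \<dots> = (\<Prod>k\<in>{1..m}. t powi (- L (Suc k)))"
      by (rule prod_powi[OF t0, symmetric]) simp
    also have "\<dots> = (\<Prod>k\<in>{1..m}. t powi (- part xs k))"
      by (rule prod.cong[OF refl]) (simp add: L_Suc)
    finally show ?thesis .
  qed
  also have "(\<Prod>i\<in>{1..Suc m}. g i / h i) = epoch q p (q * t powi int m) (int x)
     * (\<Prod>k\<in>{1..m}. epoch q p (q * t powi (int k - 1)) (int x - part xs k)
                      / epoch q p (q * t powi (int k)) (int x - part xs k))"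
  proof -
    have "(\<Prod>i\<in>{1..Suc m}. g i / h i) = g (Suc m) / h 1 * (\<Prod>k\<in>{1..m}. g k / h (Suc k))"
      by (rule tele1)
    moreover have "g (Suc m) = epoch q p (q * t powi int m) (int x)"
      unfolding g_def using L_big[of "Suc (Suc m)"] by simp
    moreover have "h 1 = 1" unfolding h_def using L1 by simp
    moreover have "(\<Prod>k\<in>{1..m}. g k / h (Suc k)) = (\<Prod>k\<in>{1..m}. epoch q p (q * t powi (int k - 1)) (int x - part xs k)
                      / epoch q p (q * t powi (int k)) (int x - part xs k))"
      by (rule prod.cong[OF refl]) (simp add: g_def h_def L_Suc)
    ultimately show ?thesis by simp
  qed
  finally show ?thesis by (simp add: mult_ac)
qed

lemma powi_2m: "(y::complex) powi (int k * 2) = y ^ k * y ^ k"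
proof -
  have "int k * 2 = int (k + k)" by simp
  thus ?thesis by (simp only: power_int_of_nat power_add)
qed

lemma assemble:
  fixes HX Tp Pqt PiPq PA2 PAt PiPa N1 N2 Pqbx G' Pw0 PiS Pqb c d :: complex
  assumes "N1 \<noteq> 0" "N2 \<noteq> 0" "G' \<noteq> 0" "Pqb \<noteq> 0" "PAt \<noteq> 0" "Pqbx \<noteq> 0" "Pw0 \<noteq> 0"
    and "HX = c * d * G'"
  shows "1 * (HX * Tp * Pqt * PiPq) * (PA2 / PAt * PiPa) * (N1 * N2) / ((Pqbx * N1) * ((G' * Pw0) * N2)) * PiS
      = (Pqb * Pqt * PA2 / (Pw0 * PAt * (Pqb * Pqbx)) * c) * d * PiPq * PiPa * PiS * Tp"
  using assms by (simp add: field_simps)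

lemma nzN1: "epochP q p t (q * (b * t powi int m) * q powi int x / t) kap \<noteq> 0"
proof -
  have "epoch q p (q * (b * t powi int m) * q powi int x / t * t powi (1 - int i)) (part kap i) \<noteq> 0" for i
  proof -
  show "epoch q p (q * (b * t powi int m) * q powi int x / t * t powi (1 - int i)) (part kap i) \<noteq> 0"
    by (rule epoch_nz[where \<alpha>="1 + int x" and \<beta>="int m - int i" and \<gamma>=0 and \<delta>=1])
       (use q0 t0 in \<open>simp_all add: mnm_def power_int_add power_int_diff power_int_minus field_simps\<close>)
qed
  thus ?thesis unfolding epochP_def by (simp add: prod_zero_iff)
qed

lemma nzN2: "epochP q p t (q * (b * t powi int m) / (a * t powi (2 * int m) * q powi int x * t)) kap \<noteq> 0"
proof -
  have "epoch q p (q * (b * t powi int m) / (a * t powi (2 * int m) * q powi int x * t) * t powi (1 - int i)) (part kap i) \<noteq> 0" for i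
  proof -
  show "epoch q p (q * (b * t powi int m) / (a * t powi (2 * int m) * q powi int x * t) * t powi (1 - int i)) (part kap i) \<noteq> 0"
    by (rule epoch_nz[where \<alpha>="1 - int x" and \<beta>="- int m - int i" and \<gamma>="-1" and \<delta>=1])
       (use q0 t0 a0 in \<open>simp_all add: mnm_def power_int_add power_int_diff power_int_minus field_simps powi_2m\<close>)
qed
  thus ?thesis unfolding epochP_def by (simp add: prod_zero_iff)
qed

lemma W1_eval:
  "W1 q p t nu kap (q powi int x) (a * t powi (2 * int m)) (b * t powi int m)
   = Kfirst m (int x) * (a / (q * b)) ^ x
     * (\<Prod>k\<in>{1..m}. epoch q p (q * t powi (int k - 1)) (int x - part xs k)
                      / epoch q p (q * t powi (int k)) (int x - part xs k))
     * (\<Prod>k\<in>{1..m}. epoch q p (a * t powi (2 * int m - int k)) (int x + part xs k)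
                      / epoch q p (a * t powi (2 * int m + 1 - int k)) (int x + part xs k))
     * (\<Prod>k\<in>{1..m}. epoch q p (q * b * t powi (int m + 1 - 2 * int k)) (2 * part xs k)
                      / epoch q p (q * b * t powi (int m - 2 * int k)) (2 * part xs k))
     * (\<Prod>k\<in>{1..m}. t powi (- part xs k))"
proof -
  define w0 where "w0 = a / b * t powi int m"
  define G' where "G' = (\<Prod>r<x. - (1 / (w0 * q ^ r)))"
  define c where "c = t powi (int m * int x)"
  define d where "d = (a / (q * b)) ^ x"
  have w0nz: "w0 \<noteq> 0" using a0 b0 t0 by (simp add: w0_def)
  have G'nz: "G' \<noteq> 0" using w0nz q0 by (simp add: G'_def prod_zero_iff)
  have W: "W1 q p t nu kap (q powi int x) (a * t powi (2 * int m)) (b * t powi int m) = Hfac q p t (b * t powi int m) nu kap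
       * epochP_ratio q p t (1 / q powi int x) nu kap * epochP_ratio q p t ((a * t powi (2 * int m)) * q powi int x) nu kap
       * (epochP q p t (q * (b * t powi int m) * q powi int x / t) kap * epochP q p t (q * (b * t powi int m) / ((a * t powi (2 * int m)) * q powi int x * t)) kap)
       / (epochP q p t (q * (b * t powi int m) * q powi int x) nu * epochP q p t (q * (b * t powi int m) / ((a * t powi (2 * int m)) * q powi int x)) nu)
       * SSf q p t (b * t powi int m) nu kap" by (rule W1_unf[OF interl])
  have H: "Hfac q p t (b * t powi int m) nu kap = 1"
  proof (rule Hfac_one)
    fix j :: nat assume "2 \<le> j"
    hence "1 \<le> j - 1" "Suc (j - 1) = j" by auto
    thus "part kap (j - 1) = part nu j" using part_kap part_nu by metis
  qed
  have D1: "epochP q p t (q * (b * t powi int m) * q powi int x) nu = epoch q p (q * b * t powi int m * q powi int x) (int x) * epochP q p t (q * (b * t powi int m) * q powi int x / t) kap"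
  proof -
    have e: "epoch q p (q * (b * t powi int m) * q powi int x) (int x) = epoch q p (q * b * t powi int m * q powi int x) (int x)"
      by (simp add: mult_ac)
    show ?thesis using epochP_shift[of "q * (b * t powi int m) * q powi int x"] unfolding e .
  qed
  have refl0: "epoch q p (q * (b * t powi int m) / ((a * t powi (2 * int m)) * q powi int x)) (int x) = G' * epoch q p w0 (int x)"
  proof -
    have "q * (b * t powi int m) / ((a * t powi (2 * int m)) * q powi int x) = q powi (1 - int x) / w0"
      unfolding w0_def using q0 t0 a0 b0
      by (simp add: power_int_diff field_simps powi_2m)
    thus ?thesis unfolding G'_def by (rule epoch_refl_nat[OF w0nz])
  qed
  have D2: "epochP q p t (q * (b * t powi int m) / ((a * t powi (2 * int m)) * q powi int x)) nu = (G' * epoch q p w0 (int x)) * epochP q p t (q * (b * t powi int m) / ((a * t powi (2 * int m)) * q powi int x * t)) kap"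
    unfolding epochP_shift[of "q * (b * t powi int m) / ((a * t powi (2 * int m)) * q powi int x)"] refl0 by (simp add: field_simps)
  have HX: "HH x = c * d * G'"
  proof -
    have "HH x = (\<Prod>r<x. (w0 / q) * (- (1 / (w0 * q ^ r))))"
      unfolding HH_def using w0nz q0 by (intro prod.cong refl) (simp add: field_simps)
    also have "\<dots> = (w0 / q) ^ x * G'" unfolding G'_def by (simp only: prod.distrib prod_constant card_lessThan)
    also have "(w0 / q) ^ x = c * d"
    proof -
      have "w0 / q = (a / (q * b)) * t powi int m" using q0 b0 by (simp add: w0_def field_simps)
      hence "(w0 / q) ^ x = (a / (q * b)) ^ x * (t powi int m) ^ x" by (simp only: power_mult_distrib)
      also have "(t powi int m) ^ x = c" unfolding c_def by (rule power_int_power')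
      finally show ?thesis unfolding d_def by (simp add: mult_ac)
    qed
    finally show ?thesis .
  qed
  have K: "Kfirst m (int x) = epoch q p (q * b * t powi int m) (int x) * epoch q p (q * t powi int m) (int x)
      * epoch q p (a * t powi (2 * int m)) (2 * int x)
      / (epoch q p w0 (int x) * epoch q p (a * t powi int m) (int x)
         * (epoch q p (q * b * t powi int m) (int x) * epoch q p (q * b * t powi int m * q powi int x) (int x))) * c"
  proof -
    have e1: "int (Suc m) - 1 = int m" "2 * int (Suc m) - 2 * 1 = 2 * int m" "int (Suc m) + 1 - 2 * 1 = int m"
      by simp_all
    have sp: "epoch q p (q * b * t powi int m) (2 * int x)
        = epoch q p (q * b * t powi int m) (int x) * epoch q p (q * b * t powi int m * q powi int x) (int x)"
      using epoch_split[of "int x" "int x" "q * b * t powi int m"] by simp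
    show ?thesis unfolding Kfirst_def Kt_def e1 sp w0_def c_def ..
  qed
  have nz1: "epoch q p (q * b * t powi int m) (int x) \<noteq> 0"
    by (rule epoch_nz[where \<alpha>=1 and \<beta>="int m" and \<gamma>=0 and \<delta>=1]) (simp_all add: mnm_def mult_ac)
  have nz2: "epoch q p (a * t powi int m) (int x) \<noteq> 0"
    by (rule epoch_nz[where \<alpha>=0 and \<beta>="int m" and \<gamma>=1 and \<delta>=0]) (simp_all add: mnm_def mult_ac)
  have nz3: "epoch q p (q * b * t powi int m * q powi int x) (int x) \<noteq> 0"
    by (rule epoch_nz[where \<alpha>="1 + int x" and \<beta>="int m" and \<gamma>=0 and \<delta>=1])
       (use q0 in \<open>simp_all add: mnm_def power_int_add mult_ac\<close>)
  have nz4: "epoch q p w0 (int x) \<noteq> 0"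
    by (rule epoch_nz[where \<alpha>=0 and \<beta>="int m" and \<gamma>=1 and \<delta>="-1"])
       (use b0 in \<open>simp_all add: mnm_def w0_def power_int_minus field_simps\<close>)
  show ?thesis
    unfolding W H D1 D2 SS_eval R1_eval R2_eval HX K d_def[symmetric]
    by (rule assemble) (fact nzN1 nzN2 G'nz nz1 nz2 nz3 nz4 refl)+
qed

end

context gen begin

lemma step:
  assumes "sorted_wrt (\<ge>) (x # xs)" "length (x # xs) \<le> N"
  shows "W1 q p t ((x # xs) @ replicate (N - length (x # xs)) 0) (xs @ replicate (N - length xs) 0)
           (q powi int x) (a * t powi (2 * int (length xs))) (b * t powi int (length xs))
         * RHSf q p t a b xs = RHSf q p t a b (x # xs)"
proof -
  interpret S: stepctx q p t a b x xs N
    using assms by unfold_locales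
  show ?thesis
    using S.W1_eval unfolding S.nu_def S.kap_def S.m_def rhs_step
    by (simp only: mult_ac)
qed

lemma main:
  assumes "sorted_wrt (\<ge>) mu" "length mu \<le> N"
  shows "Wm q p t (mu @ replicate (N - length mu) 0) (replicate N 0) (vs q t mu) a b = RHSf q p t a b mu"
  using assms
proof (induction mu)
  case Nil
  then show ?case by (simp add: RHSf_def)
next
  case (Cons x xs)
  let ?l = "int (length xs)"
  let ?nu = "(x # xs) @ replicate (N - length (x # xs)) 0"
  let ?k0 = "xs @ replicate (N - length xs) 0"
  let ?f = "\<lambda>kap. W1 q p t ?nu kap (q powi int x) (a * t powi (2 * ?l)) (b * t powi ?l)
         * Wm q p t kap (replicate N 0) (vs q t xs) a b"
  have y: "q powi int x * t powi ?l * t powi (- ?l) = q powi int x"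
    using t0 by (simp add: power_int_minus field_simps)
  have sxs: "sorted_wrt (\<ge>) xs" using Cons.prems(1) by simp
  have lenk0: "length ?k0 = N" "length ?nu = N" using Cons.prems(2) by auto
  have pk0: "part ?k0 i = part ?nu (Suc i)" if "1 \<le> i" for i
    using that by (simp add: part_append0 part_Cons_Suc del: append.simps)
  have k0in: "interlace ?nu ?k0"
  proof (rule interlace_by_part)
    show "length ?k0 = length ?nu" using lenk0 by simp
    fix i :: nat assume i: "1 \<le> i"
    show "part ?nu (Suc i) \<le> part ?k0 i" using pk0[OF i] by simp
    show "part ?k0 i \<le> part ?nu i"
      using pk0[OF i] part_sorted[OF Cons.prems(1) i] by (simp add: part_append0 del: append.simps)
  qed
  have zero: "?f kap = 0" if "kap \<in> {kap. interlace ?nu kap}" "kap \<noteq> ?k0" for kap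
  proof (rule ccontr)
    assume "?f kap \<noteq> 0"
    hence wm: "Wm q p t kap (replicate N 0) (vs q t xs) a b \<noteq> 0" by auto
    have il: "interlace ?nu kap" using that by simp
    have "kap = ?k0"
    proof (rule length_part_eq)
      show "length kap = length ?k0" using il lenk0 unfolding interlace_def by simp
      fix i :: nat assume i: "1 \<le> i"
      have "part kap i \<le> part xs i" using vanish[OF sxs wm] .
      moreover have "part ?nu (Suc i) \<le> part kap i" by (rule interlace_part(2)[OF il i])
      ultimately show "part kap i = part ?k0 i" using pk0[OF i] by (simp add: part_append0 del: append.simps)
    qed
    with that show False by simp
  qed
  have "Wm q p t ?nu (replicate N 0) (vs q t (x # xs)) a b = (\<Sum>kap\<in>{kap. interlace ?nu kap}. ?f kap)"
    unfolding vs.simps Wm_cons length_vs y ..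
  also have "\<dots> = (\<Sum>kap\<in>{kap. interlace ?nu kap}. if kap = ?k0 then ?f ?k0 else 0)"
  proof (rule sum.cong[OF refl])
    fix kap assume kin: "kap \<in> {kap. interlace ?nu kap}"
    show "?f kap = (if kap = ?k0 then ?f ?k0 else 0)"
    proof (cases "kap = ?k0")
      case False
      show ?thesis unfolding if_not_P[OF False] by (rule zero[OF kin False])
    qed simp
  qed
  also have "\<dots> = ?f ?k0"
    using interlace_finite[of ?nu] k0in by (simp add: sum.delta)
  also have "\<dots> = W1 q p t ?nu ?k0 (q powi int x) (a * t powi (2 * ?l)) (b * t powi ?l) * RHSf q p t a b xs"
    using Cons by simp
  also have "\<dots> = RHSf q p t a b (x # xs)" by (rule step[OF Cons.prems])
  finally show ?case .
qed

end

theorem mainTheorem12: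
  fixes lam :: "nat list" and q p t a b :: complex
  assumes "sorted_wrt (\<ge>) lam"
    and "norm p < 1"
    and "generic_params q p t a b"
  shows "(let n = length lam; L = part lam; P = epoch q p; ii = int in
     Wm q p t lam (replicate n 0) (map (\<lambda>i. q powi L i * t powi (ii n - ii i)) [1..<n+1]) a b
   = (\<Prod>k\<in>{1..n}.
        (P (q * b * t powi (ii n - ii k)) (L k) * P (q * t powi (ii n - ii k)) (L k)
         * P (a * t powi (2 * ii n - 2 * ii k)) (2 * L k))
        / (P ((a / b) * t powi (ii n - ii k)) (L k) * P (a * t powi (ii n - ii k)) (L k)
           * P (q * b * t powi (ii n + 1 - 2 * ii k)) (2 * L k))
        * t powi ((ii n + 1 - 2 * ii k) * L k))
     * (a / (q * b)) ^ sum_list lam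
     * (\<Prod>i\<in>{1..n}. \<Prod>j\<in>{i+1..n}.
        (P (q * t powi (ii j - ii i - 1)) (L i - L j) * P (a * t powi (2 * ii n - ii i - ii j)) (L i + L j))
        / (P (q * t powi (ii j - ii i)) (L i - L j) * P (a * t powi (1 + 2 * ii n - ii i - ii j)) (L i + L j))))"
proof -
  interpret gen q p t a b using assms(2,3) by unfold_locales
  have "Wm q p t (lam @ replicate (length lam - length lam) 0) (replicate (length lam) 0) (vs q t lam) a b
        = RHSf q p t a b lam"
    by (rule main[OF assms(1)]) simp
  hence "Wm q p t lam (replicate (length lam) 0)
          (map (\<lambda>i. q powi part lam i * t powi (int (length lam) - int i)) [1..<length lam + 1]) a b
        = RHSf q p t a b lam" by (simp only: vs_map diff_self_eq_0 replicate_0 append_Nil2)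
  thus ?thesis unfolding RHSf_def Let_def .
qed

end
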